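(* For every positive integer $k$, \[ \sum_{\lfloor k/2\rfloor<i+t\le k}B_{2t}\,2^{2t}\binom{2k+2}{2t,\;2i+1,\;2k-2t-2i+1}=(k+1)\left(2^{2k}-(-1)^k\binom{2k}{k}\right), \] where the sum ranges over all pairs of nonnegative integers $i,t$ with $\lfloor k/2\rfloor<i+t\le k$.
   Context: The Bernoulli numbers $B_m$ ($m\ge 0$) are defined by $\dfrac{x}{e^x-1}=\sum_{m=0}^\infty B_m\dfrac{x^m}{m!}$. The trinomial coefficient is $\binom{n}{r_1,r_2,r_3}=\dfrac{n!}{r_1!\,r_2!\,r_3!}$ for nonnegative integers $r_1+r_2+r_3=n$. *)

theory Defs
  imports Complex_Main "HOL-Computational_Algebra.Formal_Power_Series"
begin

definition bernoulli_num :: "nat \<Rightarrow> real" where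
  "bernoulli_num m = fact m * fps_nth (fps_X / (fps_exp 1 - 1)) m"

text \<open>Trinomial coefficient n!/(r1! r2! r3!) (used only with r1+r2+r3 = n).\<close>
definition trinomial :: "nat \<Rightarrow> nat \<Rightarrow> nat \<Rightarrow> nat \<Rightarrow> nat" where
  "trinomial n r1 r2 r3 = fact n div (fact r1 * fact r2 * fact r3)"

end

theory Submission
  imports Defs
begin

definition EE :: "real fps" where "EE = fps_X / (fps_exp 1 - 1)"

lemma EE_mult: "EE * (fps_exp 1 - 1) = fps_X"
proof -
  let ?D = "fps_exp 1 - 1 :: real fps"
  have d1: "fps_nth ?D 1 = 1" by simp
  have nz: "?D \<noteq> 0" using d1 by (metis fps_zero_nth zero_neq_one)
  have sd: "subdegree ?D = 1"
    by (rule subdegreeI) auto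
  have "?D dvd fps_X" using fps_dvd_iff[OF nz] sd by simp
  then show ?thesis unfolding EE_def by simp
qed

definition HH :: "real fps" where "HH = Abs_fps (\<lambda>m. 2 ^ m * fps_nth EE m)"

lemma HH_mult: "HH * (fps_exp 2 - 1) = 2 * fps_X"
proof (rule fps_ext)
  fix m
  have c: "fps_nth (fps_exp 2 - 1 :: real fps) i = 2^i * fps_nth (fps_exp 1 - 1 :: real fps) i" for i
    by (cases i) auto
  have "fps_nth (HH * (fps_exp 2 - 1)) m = (\<Sum>j=0..m. 2^m * (fps_nth EE j * fps_nth (fps_exp 1 - 1) (m - j)))"
    unfolding fps_mult_nth HH_def c
    by (intro sum.cong refl) (auto simp: power_add[symmetric])
  also have "\<dots> = 2^m * fps_nth (EE * (fps_exp 1 - 1)) m"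
    by (simp add: fps_mult_nth sum_distrib_left)
  also have "\<dots> = fps_nth (2 * fps_X :: real fps) m" unfolding EE_mult
    by (cases "m = 1") (auto simp: numeral_fps_const)
  finally show "fps_nth (HH * (fps_exp 2 - 1)) m = fps_nth (2 * fps_X :: real fps) m" .
qed

lemma HH_sinh: "HH * (fps_exp 1 - fps_exp (-1)) = 2 * fps_X * fps_exp (-1)"
proof -
  have e0: "fps_exp (0::real) = 1" by (rule fps_ext) simp
  have m1: "fps_exp (-1) * fps_exp 1 = (1 :: real fps)"
    using fps_exp_add_mult[of "-1::real" 1] e0 by simp
  have e2: "fps_exp 2 = fps_exp 1 * (fps_exp 1 :: real fps)"
    using fps_exp_add_mult[of "1::real" 1] by simp
  have "(HH * (fps_exp 1 - fps_exp (-1))) * fps_exp 1 = HH * (fps_exp 2 - 1)"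
    using e2 m1 by (simp add: algebra_simps)
  also have "\<dots> = (2 * fps_X * fps_exp (-1)) * fps_exp 1"
    using HH_mult m1 by (simp add: mult.assoc)
  finally show ?thesis
    by (rule mult_right_cancel[THEN iffD1, rotated]) (metis fps_exp_nth power_0 fact_0 div_by_1 of_nat_1 fps_zero_nth zero_neq_one)
qed

lemma sum_pairs: "(\<Sum>j<2*m. f j) = (\<Sum>t<m. f (2*t) + f (2*t+1))"
  for f :: "nat \<Rightarrow> 'a::comm_monoid_add"
  by (induction m) (auto simp: add_ac)

lemma EE_key: "(\<Sum>t<Suc n. 4^t * fps_nth EE (2*t) / fact (2*n+1-2*t)) = 1 / fact (2*n)"
proof -
  have "fps_nth (HH * (fps_exp 1 - fps_exp (-1))) (2*n+1)
      = (\<Sum>j<2*Suc n. fps_nth HH j * ((1 - (-1)^(2*n+1-j)) / fact (2*n+1-j)))"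
    unfolding fps_mult_nth
    by (intro sum.cong) (auto simp: diff_divide_distrib)
  also have "\<dots> = (\<Sum>t<Suc n. 2 * (4^t * fps_nth EE (2*t) / fact (2*n+1-2*t)))"
    unfolding sum_pairs
  proof (intro sum.cong refl)
    fix t assume "t \<in> {..<Suc n}"
    then have t: "t \<le> n" by simp
    have a: "2*n+1-2*t = Suc (2*(n-t))" using t by simp
    have b: "2*n+1-(2*t+1) = 2*(n-t)" using t by simp
    show "fps_nth HH (2*t) * ((1 - (-1)^(2*n+1-2*t)) / fact (2*n+1-2*t)) +
          fps_nth HH (2*t+1) * ((1 - (-1)^(2*n+1-(2*t+1))) / fact (2*n+1-(2*t+1)))
        = 2 * (4^t * fps_nth EE (2*t) / fact (2*n+1-2*t))"
      unfolding b using a by (simp add: HH_def power_mult)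
  qed
  also have "\<dots> = 2 * (\<Sum>t<Suc n. 4^t * fps_nth EE (2*t) / fact (2*n+1-2*t))"
    by (simp add: sum_distrib_left)
  finally have L: "fps_nth (HH * (fps_exp 1 - fps_exp (-1))) (2*n+1)
      = 2 * (\<Sum>t<Suc n. 4^t * fps_nth EE (2*t) / fact (2*n+1-2*t))" .
  have R: "fps_nth (2 * fps_X * fps_exp (-1) :: real fps) (2*n+1) = 2 / fact (2*n)"
    by (simp add: numeral_fps_const mult.assoc power_mult)
  show ?thesis using L R HH_sinh by simp
qed

lemma sum_pairs2: "(\<Sum>n\<in>{a<..b}. f (2*n-1) + f (2*n)) = (\<Sum>m\<in>{2*a<..2*b}. f m)"
  for f :: "nat \<Rightarrow> 'a::comm_monoid_add"
proof (induction b)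
  case 0 then show ?case by simp
next
  case (Suc b)
  show ?case
  proof (cases "a \<le> b")
    case True
    have e1: "{a<..Suc b} = insert (Suc b) {a<..b}" using True by auto
    have e2: "{2*a<..2*Suc b} = insert (2*b+2) (insert (2*b+1) {2*a<..2*b})" using True by auto
    show ?thesis unfolding e1 e2 using Suc by (simp add: add_ac)
  next
    case False
    then have "{a<..Suc b} = {}" "{2*a<..2*Suc b} = {}" by auto
    then show ?thesis by simp
  qed
qed

lemma half_row: "2 * (\<Sum>m\<in>{k<..2*k}. (2*k) choose m) + ((2*k) choose k) = 4^k"
proof -
  have "(\<Sum>m<k. (2*k) choose m) = (\<Sum>m\<in>{k<..2*k}. (2*k) choose m)"
    by (rule sum.reindex_bij_witness[of _ "\<lambda>m. 2*k-m" "\<lambda>m. 2*k-m"])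
       (auto simp: binomial_symmetric[symmetric] intro: binomial_symmetric)
  moreover have "{..2*k} = {..<k} \<union> ({k} \<union> {k<..2*k})" by auto
  then have "(\<Sum>m\<le>2*k. (2*k) choose m) = (\<Sum>m<k. (2*k) choose m) + ((2*k) choose k) + (\<Sum>m\<in>{k<..2*k}. (2*k) choose m)"
    by (simp, subst sum.union_disjoint, auto)
  ultimately show ?thesis using choose_row_sum[of "2*k"] by (simp add: power_mult)
qed

lemma comb_part: "2 * real (\<Sum>n\<in>{k div 2<..k}. (2*k+1) choose (2*n)) = 2 ^ (2 * k) - (-1) ^ k * real (2 * k choose k)"
proof -
  have "(\<Sum>n\<in>{k div 2<..k}. (2*k+1) choose (2*n)) = (\<Sum>n\<in>{k div 2<..k}. ((2*k) choose (2*n-1)) + ((2*k) choose (2*n)))"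
  proof (intro sum.cong refl)
    fix n assume "n \<in> {k div 2<..k}"
    then have e: "2*n = Suc (2*n-1)" by simp
    show "(2*k+1) choose (2*n) = ((2*k) choose (2*n-1)) + ((2*k) choose (2*n))"
      by (subst (1 3) e) simp
  qed
  also have "\<dots> = (\<Sum>m\<in>{2*(k div 2)<..2*k}. (2*k) choose m)" by (rule sum_pairs2)
  finally have S: "(\<Sum>n\<in>{k div 2<..k}. (2*k+1) choose (2*n)) = (\<Sum>m\<in>{2*(k div 2)<..2*k}. (2*k) choose m)" .
  have H: "2 * real (\<Sum>m\<in>{k<..2*k}. (2*k) choose m) + real ((2*k) choose k) = 2^(2*k)"
    using arg_cong[OF half_row[of k], of real] by (simp add: power_mult)
  show ?thesis
  proof (cases "even k")
    case True
    then have "2*(k div 2) = k" by simp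
    then show ?thesis using S H True by simp
  next
    case False
    then have k: "2*(k div 2) = k - 1" "k > 0" by (simp_all add: odd_pos)
    have "{k-1<..2*k} = insert k {k<..2*k}" using k by auto
    then have "(\<Sum>m\<in>{2*(k div 2)<..2*k}. (2*k) choose m) = ((2*k) choose k) + (\<Sum>m\<in>{k<..2*k}. (2*k) choose m)"
      using k by simp
    then show ?thesis using S H False by simp
  qed
qed

lemma trinomial_real: "real (trinomial (a+b+c) a b c) = fact (a+b+c) / (fact a * fact b * fact c)"
proof -
  have e1: "fact (a+b+c) = fact a * fact (b+c) * ((a+b+c) choose a)"
    using binomial_fact_lemma[of a "a+b+c"] by (simp add: add.assoc)
  have e2: "fact (b+c) = fact b * fact c * ((b+c) choose b)"
    using binomial_fact_lemma[of b "b+c"] by simp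
  have d: "fact a * fact b * fact c dvd (fact (a+b+c) :: nat)"
    unfolding e1 e2 by (simp add: mult.assoc)
  show ?thesis unfolding trinomial_def using d
    by (simp add: real_of_nat_div)
qed

lemma bern_EE: "bernoulli_num m = fact m * fps_nth EE m"
  unfolding bernoulli_num_def EE_def by simp

lemma gen_cancel: "(b::real) \<noteq> 0 \<Longrightarrow> c \<noteq> 0 \<Longrightarrow> d \<noteq> 0 \<Longrightarrow> b*y*z*(a/(b*c*d)) = a/d*(z*y/c)"
  by (simp add: field_simps)

lemma inner:
  assumes "n \<le> k"
  shows "(\<Sum>t<Suc n. bernoulli_num (2 * t) * 2 ^ (2 * t) *
            real (trinomial (2 * k + 2) (2 * t) (2 * (n-t) + 1) (2 * k - 2 * t - 2 * (n-t) + 1)))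
        = real ((2*k+2) * ((2*k+1) choose (2*n)))"
proof -
  have "(\<Sum>t<Suc n. bernoulli_num (2 * t) * 2 ^ (2 * t) *
            real (trinomial (2 * k + 2) (2 * t) (2 * (n-t) + 1) (2 * k - 2 * t - 2 * (n-t) + 1)))
      = (\<Sum>t<Suc n. fact (2*k+2) / fact (2*k-2*n+1) * (4^t * fps_nth EE (2*t) / fact (2*n+1-2*t)))"
  proof (intro sum.cong refl)
    fix t assume "t \<in> {..<Suc n}"
    then have t: "t \<le> n" by simp
    have s: "2 * k + 2 = 2*t + (2*(n-t)+1) + (2 * k - 2 * t - 2 * (n-t) + 1)" using t assms by simp
    have s2: "2 * k - 2 * t - 2 * (n-t) + 1 = 2*k-2*n+1" "2*(n-t)+1 = 2*n+1-2*t" using t assms by simp_all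
    show "bernoulli_num (2 * t) * 2 ^ (2 * t) *
            real (trinomial (2 * k + 2) (2 * t) (2 * (n-t) + 1) (2 * k - 2 * t - 2 * (n-t) + 1))
        = fact (2*k+2) / fact (2*k-2*n+1) * (4^t * fps_nth EE (2*t) / fact (2*n+1-2*t))"
    proof -
      have q: "real (trinomial (2 * k + 2) (2 * t) (2 * (n-t) + 1) (2 * k - 2 * t - 2 * (n-t) + 1))
        = fact (2*k+2) / (fact (2*t) * fact (2*(n-t)+1) * fact (2 * k - 2 * t - 2 * (n-t) + 1))"
        using trinomial_real[of "2*t" "2*(n-t)+1" "2 * k - 2 * t - 2 * (n-t) + 1"] unfolding s[symmetric] .
      have p: "(2::real)^(2*t) = 4^t" by (simp add: power_mult)
      show ?thesis unfolding q unfolding s2 bern_EE p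
        by (rule gen_cancel) simp_all
    qed
  qed
  also have "\<dots> = fact (2*k+2) / fact (2*k-2*n+1) * (1 / fact (2*n))"
    unfolding sum_distrib_left[symmetric] EE_key ..
  also have "\<dots> = real ((2*k+2) * ((2*k+1) choose (2*n)))"
  proof -
    have b: "fact (2*n) * fact (2*k+1-2*n) * ((2*k+1) choose (2*n)) = fact (2*k+1)"
      using assms by (intro binomial_fact_lemma) simp
    have e: "2*k+1-2*n = 2*k-2*n+1" using assms by simp
    have B: "(fact (2*k+1)::real) = fact (2*n) * fact (2*k-2*n+1) * real ((2*k+1) choose (2*n))"
      using arg_cong[OF b, of "of_nat :: nat \<Rightarrow> real"] unfolding e of_nat_mult of_nat_fact by simp
    have C: "(fact (2*k+2)::real) = real (2*k+2) * fact (2*k+1)"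
    proof -
      have "2*k+2 = Suc (2*k+1)" by simp
      then show ?thesis by (simp only: fact_Suc)
    qed
    have g: "(a::real) \<noteq> 0 \<Longrightarrow> b \<noteq> 0 \<Longrightarrow> m * (a*b*c) / b * (1/a) = m * c" for a b c m
      by (simp add: field_simps)
    show ?thesis unfolding C B of_nat_mult by (rule g) simp_all
  qed
  finally show ?thesis .
qed

theorem mainTheorem4:
  fixes k :: nat
  assumes "k > 0"
  shows "(\<Sum>(i, t) \<in> {(i, t). k div 2 < i + t \<and> i + t \<le> k}.
            bernoulli_num (2 * t) * 2 ^ (2 * t) *
            real (trinomial (2 * k + 2) (2 * t) (2 * i + 1) (2 * k - 2 * t - 2 * i + 1)))
         = real (k + 1) * (2 ^ (2 * k) - (-1) ^ k * real (2 * k choose k))"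
proof -
  define F where "F i t = bernoulli_num (2 * t) * 2 ^ (2 * t) *
            real (trinomial (2 * k + 2) (2 * t) (2 * i + 1) (2 * k - 2 * t - 2 * i + 1))" for i t
  have "(\<Sum>(i, t) \<in> {(i, t). k div 2 < i + t \<and> i + t \<le> k}. F i t)
      = (\<Sum>(n, t) \<in> (SIGMA n:{k div 2<..k}. {..<Suc n}). F (n - t) t)"
    by (rule sum.reindex_bij_witness[of _ "\<lambda>(n,t). (n-t,t)" "\<lambda>(i,t). (i+t,t)"]) auto
  also have "\<dots> = (\<Sum>n\<in>{k div 2<..k}. \<Sum>t<Suc n. F (n - t) t)"
    by (rule sum.Sigma[symmetric]) auto
  also have "\<dots> = (\<Sum>n\<in>{k div 2<..k}. real ((2*k+2) * ((2*k+1) choose (2*n))))"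
    unfolding F_def by (intro sum.cong refl inner) auto
  also have "\<dots> = real (k+1) * (2 * real (\<Sum>n\<in>{k div 2<..k}. (2*k+1) choose (2*n)))"
    unfolding of_nat_sum sum_distrib_left by (intro sum.cong refl) (simp add: algebra_simps)
  also have "\<dots> = real (k + 1) * (2 ^ (2 * k) - (-1) ^ k * real (2 * k choose k))"
    using comb_part[of k] by simp
  finally show ?thesis by (simp add: F_def)
qed

end
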